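(* Let $\phi$ be a reduced Boolean formula in the variables $x_1,\dots,x_n$ defining a set $S \subseteq \{0,1\}^n$ and let $Q \subseteq [0,1]^n$ be any convex set containing $S$. Then $\phi(Q) \cap \mathbb{Z}^n = S$.
   Context: Boolean formulas are built from input variables $x_1,\dots,x_n$ using $\wedge$, $\vee$, $\neg$, interpreted as functions $\{0,1\}^n\to\{0,1\}$; $\phi$ defines $S=\{x\in\{0,1\}^n:\phi(x)=1\}$. A formula is reduced if negations apply only to input variables. For a reduced $\phi$ and convex $Q\subseteq[0,1]^n$, $\phi(Q)$ is defined recursively: $x_i$ is replaced by $\{x \in Q : x_i = 1\}$; $\neg x_i$ by $\{x \in Q : x_i = 0\}$; a conjunction by the intersection of the corresponding sets; a disjunction by the convex hull of the union of the corresponding sets. *)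

theory Defs
  imports "HOL-Analysis.Analysis"
begin

datatype 'n bformula =
    BVar 'n
  | BNot "'n bformula"
  | BAnd "'n bformula" "'n bformula"
  | BOr "'n bformula" "'n bformula"

fun beval :: "'n bformula \<Rightarrow> ('n \<Rightarrow> bool) \<Rightarrow> bool" where
  "beval (BVar i) a = a i"
| "beval (BNot f) a = (\<not> beval f a)"
| "beval (BAnd f g) a = (beval f a \<and> beval g a)"
| "beval (BOr f g) a = (beval f a \<or> beval g a)"

fun reduced :: "'n bformula \<Rightarrow> bool" where
  "reduced (BVar i) = True"
| "reduced (BNot (BVar i)) = True"
| "reduced (BNot _) = False"
| "reduced (BAnd f g) = (reduced f \<and> reduced g)"
| "reduced (BOr f g) = (reduced f \<and> reduced g)"

definition binary_points :: "(real^'n) set" where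
  "binary_points = {x. \<forall>i. x $ i = 0 \<or> x $ i = 1}"

definition defined_set :: "'n::finite bformula \<Rightarrow> (real^'n) set" where
  "defined_set \<phi> = {x \<in> binary_points. beval \<phi> (\<lambda>i. x $ i = 1)}"

definition unit_cube :: "(real^'n) set" where
  "unit_cube = {x. \<forall>i. 0 \<le> x $ i \<and> x $ i \<le> 1}"

definition int_lattice :: "(real^'n) set" where
  "int_lattice = {x. \<forall>i. x $ i \<in> \<int>}"

text \<open>phi(Q) for a reduced formula phi and a convex set Q
  (the value on non-reduced negations is irrelevant and set to {}).\<close>
fun relax :: "'n::finite bformula \<Rightarrow> (real^'n) set \<Rightarrow> (real^'n) set" where
  "relax (BVar i) Q = {x \<in> Q. x $ i = 1}"
| "relax (BNot (BVar i)) Q = {x \<in> Q. x $ i = 0}"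
| "relax (BNot _) Q = {}"
| "relax (BAnd f g) Q = relax f Q \<inter> relax g Q"
| "relax (BOr f g) Q = convex hull (relax f Q \<union> relax g Q)"

end

theory Submission
  imports Defs
begin

lemma coord_lemma:
  fixes a b u x :: real
  assumes "0 < u" "u < 1" "0 \<le> a" "a \<le> 1" "0 \<le> b" "b \<le> 1"
    "x = 0 \<or> x = 1" "x = (1 - u) * a + u * b"
  shows "a = x \<and> b = x"
proof (cases "x = 0")
  case True
  have "(1-u)*a \<ge> 0" "u*b \<ge> 0" using assms by auto
  hence "(1-u)*a = 0" "u*b = 0" using assms True by linarith+
  thus ?thesis using assms True by auto
next
  case False
  hence x1: "x = 1" using assms by auto
  have "(1-u)*(1-a) \<ge> 0" "u*(1-b) \<ge> 0" using assms by auto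
  moreover have "(1-u)*(1-a) + u*(1-b) = 0" using assms x1 by (simp add: algebra_simps)
  ultimately have "(1-u)*(1-a) = 0" "u*(1-b) = 0" by linarith+
  thus ?thesis using assms x1 by auto
qed

lemma binary_extreme:
  assumes "x \<in> binary_points" "x \<in> T" "T \<subseteq> unit_cube"
  shows "x extreme_point_of T"
  unfolding extreme_point_of_def
proof (intro conjI ballI)
  show "x \<in> T" by fact
  fix a b assume ab: "a \<in> T" "b \<in> T"
  show "x \<notin> open_segment a b"
  proof
    assume "x \<in> open_segment a b"
    then obtain u where u: "0 \<le> u" "u \<le> 1" "x = (1 - u) *\<^sub>R a + u *\<^sub>R b" "x \<noteq> a" "x \<noteq> b"
      unfolding open_segment_def closed_segment_def by auto
    have "u \<noteq> 0" "u \<noteq> 1" using u by auto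
    hence u': "0 < u" "u < 1" using u by auto
    have "a $ i = x $ i \<and> b $ i = x $ i" for i
      apply (rule coord_lemma[OF u'])
      using assms ab u(3) unfolding unit_cube_def binary_points_def by auto
    hence "a = x" by (simp add: vec_eq_iff)
    thus False using u by simp
  qed
qed

lemma hull_binary:
  assumes "x \<in> binary_points" "x \<in> convex hull T" "T \<subseteq> unit_cube"
  shows "x \<in> T"
proof -
  have "convex hull T \<subseteq> unit_cube"
  proof (rule hull_minimal[OF assms(3)])
    show "convex (unit_cube :: (real^'a) set)"
      unfolding unit_cube_def convex_def by (auto intro!: convex_bound_le add_nonneg_nonneg)
  qed
  then show ?thesis using binary_extreme[OF assms(1,2)] extreme_point_of_convex_hull by blast
qed

lemma main:
  fixes \<phi> :: "'n::finite bformula" and Q :: "(real^'n) set"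
  assumes "reduced \<phi>" "convex Q" "Q \<subseteq> unit_cube"
  shows "relax \<phi> Q \<subseteq> Q \<and> relax \<phi> Q \<inter> binary_points = {x \<in> Q \<inter> binary_points. beval \<phi> (\<lambda>i. x $ i = 1)}"
  using assms(1)
proof (induction \<phi> rule: reduced.induct)
  case (1 i)
  then show ?case by auto
next
  case (2 i)
  then show ?case by (auto simp: binary_points_def)
next
  case (4 f g)
  then show ?case by auto
next
  case (5 f g)
  then have IH: "relax f Q \<subseteq> Q" "relax g Q \<subseteq> Q"
    "relax f Q \<inter> binary_points = {x \<in> Q \<inter> binary_points. beval f (\<lambda>i. x $ i = 1)}"
    "relax g Q \<inter> binary_points = {x \<in> Q \<inter> binary_points. beval g (\<lambda>i. x $ i = 1)}" by auto
  have sub: "relax (BOr f g) Q \<subseteq> Q"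
    using IH(1,2) assms(2) by (simp add: hull_minimal)
  have "relax (BOr f g) Q \<inter> binary_points \<subseteq> (relax f Q \<union> relax g Q) \<inter> binary_points"
    using hull_binary[of _ "relax f Q \<union> relax g Q"] IH(1,2) assms(3) by auto
  moreover have "(relax f Q \<union> relax g Q) \<subseteq> relax (BOr f g) Q"
    by (simp add: hull_subset)
  ultimately have "relax (BOr f g) Q \<inter> binary_points = (relax f Q \<union> relax g Q) \<inter> binary_points"
    by blast
  then show ?case using sub IH(3,4) by auto
qed auto

theorem corollary4p6:
  fixes \<phi> :: "'n::finite bformula" and Q :: "(real^'n) set"
  assumes "reduced \<phi>"
    and "convex Q"
    and "Q \<subseteq> unit_cube"
    and "defined_set \<phi> \<subseteq> Q"
  shows "relax \<phi> Q \<inter> int_lattice = defined_set \<phi>"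
proof -
  have M: "relax \<phi> Q \<subseteq> Q" "relax \<phi> Q \<inter> binary_points = {x \<in> Q \<inter> binary_points. beval \<phi> (\<lambda>i. x $ i = 1)}"
    using main[OF assms(1-3)] by auto
  have QI: "Q \<inter> int_lattice = Q \<inter> binary_points"
  proof -
    have "x \<in> binary_points" if "x \<in> Q" "x \<in> int_lattice" for x
    proof -
      have "x $ i = 0 \<or> x $ i = 1" for i
      proof -
        have "0 \<le> x $ i" "x $ i \<le> 1" using that assms(3) unfolding unit_cube_def by auto
        moreover have "x $ i \<in> \<int>" using that unfolding int_lattice_def by auto
        then obtain k where "x $ i = of_int k" by (rule Ints_cases)
        ultimately show ?thesis by auto
      qed
      thus ?thesis unfolding binary_points_def by auto
    qed
    moreover have "(binary_points :: (real^'n) set) \<subseteq> int_lattice"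
    proof
      fix x :: "real^'n" assume "x \<in> binary_points"
      then have "x $ i = 0 \<or> x $ i = 1" for i unfolding binary_points_def by auto
      then have "x $ i \<in> \<int>" for i by (metis Ints_0 Ints_1)
      then show "x \<in> int_lattice" unfolding int_lattice_def by auto
    qed
    ultimately show ?thesis by blast
  qed
  have "relax \<phi> Q \<inter> int_lattice = relax \<phi> Q \<inter> binary_points"
    using M(1) QI by blast
  also have "\<dots> = defined_set \<phi>"
    using M(2) assms(4) unfolding defined_set_def by auto
  finally show ?thesis .
qed

end
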